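(* Let $D$ be a $3$-dicritical digraph. Then $D$ does not contain $O_5$ as a (not necessarily induced) subdigraph.
   Context: A $2$-dicolouring is a map to $\{1,2\}$ whose colour classes induce acyclic subdigraphs (digons count as cycles). $D$ is $3$-dicritical if $D$ has no $2$-dicolouring but every proper subdigraph has one. $O_5$ is the oriented graph on vertices $u,v,x,y,z$ with arcs $xy,yz,zx$ (a directed triangle), $ux,uy,uz$, $xv,yv,zv$, and $uv$. "Contains as a subdigraph" means up to isomorphism. *)

theory Defs
  imports Main
begin

definition digraph :: "'a set \<Rightarrow> ('a \<times> 'a) set \<Rightarrow> bool" where
  "digraph V A \<longleftrightarrow> finite V \<and> A \<subseteq> V \<times> V \<and> (\<forall>v. (v, v) \<notin> A)"

text \<open>A 2-dicolouring: each colour class induces an acyclic subdigraph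
  (a digon is a directed cycle of length 2).\<close>
definition dicolouring2 :: "'a set \<Rightarrow> ('a \<times> 'a) set \<Rightarrow> ('a \<Rightarrow> nat) \<Rightarrow> bool" where
  "dicolouring2 V A c \<longleftrightarrow> (\<forall>v\<in>V. c v \<in> {1, 2}) \<and>
     (\<forall>i\<in>{1::nat, 2}. acyclic (A \<inter> ({v\<in>V. c v = i} \<times> {v\<in>V. c v = i})))"

definition two_dicolourable :: "'a set \<Rightarrow> ('a \<times> 'a) set \<Rightarrow> bool" where
  "two_dicolourable V A \<longleftrightarrow> (\<exists>c. dicolouring2 V A c)"

definition subdigraph :: "'a set \<Rightarrow> ('a \<times> 'a) set \<Rightarrow> 'a set \<Rightarrow> ('a \<times> 'a) set \<Rightarrow> bool" where
  "subdigraph V' A' V A \<longleftrightarrow> V' \<subseteq> V \<and> A' \<subseteq> A \<and> A' \<subseteq> V' \<times> V'"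

definition dicritical3 :: "'a set \<Rightarrow> ('a \<times> 'a) set \<Rightarrow> bool" where
  "dicritical3 V A \<longleftrightarrow> digraph V A \<and> \<not> two_dicolourable V A \<and>
     (\<forall>V' A'. subdigraph V' A' V A \<and> (V', A') \<noteq> (V, A) \<longrightarrow> two_dicolourable V' A')"

definition contains_O5 :: "'a set \<Rightarrow> ('a \<times> 'a) set \<Rightarrow> bool" where
  "contains_O5 V A \<longleftrightarrow> (\<exists>u v x y z. u \<in> V \<and> v \<in> V \<and> x \<in> V \<and> y \<in> V \<and> z \<in> V \<and>
     distinct [u, v, x, y, z] \<and>
     (x, y) \<in> A \<and> (y, z) \<in> A \<and> (z, x) \<in> A \<and>
     (u, x) \<in> A \<and> (u, y) \<in> A \<and> (u, z) \<in> A \<and>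
     (x, v) \<in> A \<and> (y, v) \<in> A \<and> (z, v) \<in> A \<and> (u, v) \<in> A)"

end

theory Submission
  imports Defs
begin

theorem lemma15:
  fixes V :: "'a set" and A :: "('a \<times> 'a) set"
  assumes "dicritical3 V A"
  shows "\<not> contains_O5 V A"
proof
  assume "contains_O5 V A"
  then obtain u v x y z where
    mem: "u \<in> V" "v \<in> V" "x \<in> V" "y \<in> V" "z \<in> V" and
    d: "distinct [u, v, x, y, z]" and
    arcs: "(x, y) \<in> A" "(y, z) \<in> A" "(z, x) \<in> A"
     "(u, x) \<in> A" "(u, y) \<in> A" "(u, z) \<in> A"
     "(x, v) \<in> A" "(y, v) \<in> A" "(z, v) \<in> A" "(u, v) \<in> A"
    unfolding contains_O5_def by blast
  define A' where "A' = A - {(u, v)}"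
  have sub: "subdigraph V A' V A" using assms
    unfolding A'_def subdigraph_def dicritical3_def digraph_def by blast
  have ne: "(V, A') \<noteq> (V, A)" using arcs(10) unfolding A'_def by blast
  from assms sub ne obtain c where c: "dicolouring2 V A' c"
    unfolding dicritical3_def two_dicolourable_def by blast
  have arcs': "(x, y) \<in> A'" "(y, z) \<in> A'" "(z, x) \<in> A'"
     "(u, x) \<in> A'" "(u, y) \<in> A'" "(u, z) \<in> A'"
     "(x, v) \<in> A'" "(y, v) \<in> A'" "(z, v) \<in> A'"
    using arcs d unfolding A'_def by auto
  have col: "\<forall>w\<in>V. c w \<in> {1, 2}" using c unfolding dicolouring2_def by blast
  have acy: "\<And>i. i \<in> {1::nat, 2} \<Longrightarrow> acyclic (A' \<inter> ({w\<in>V. c w = i} \<times> {w\<in>V. c w = i}))"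
    using c unfolding dicolouring2_def by blast
  have "dicolouring2 V A c"
    unfolding dicolouring2_def
  proof (intro conjI ballI)
    show "\<And>w. w \<in> V \<Longrightarrow> c w \<in> {1, 2}" using col by blast
  next
    fix i :: nat assume i: "i \<in> {1, 2}"
    define C where "C = {w\<in>V. c w = i}"
    define R where "R = A' \<inter> (C \<times> C)"
    have aR: "acyclic R" using acy[OF i] unfolding R_def C_def .
    have notmono: "\<not> (x \<in> C \<and> y \<in> C \<and> z \<in> C)"
    proof
      assume h: "x \<in> C \<and> y \<in> C \<and> z \<in> C"
      have "(x, y) \<in> R" "(y, z) \<in> R" "(z, x) \<in> R" using h arcs' unfolding R_def by auto
      hence "(x, x) \<in> R\<^sup>+" by (meson trancl.r_into_trancl trancl.trancl_into_trancl)
      thus False using aR unfolding acyclic_def by blast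
    qed
    have sub2: "A \<inter> (C \<times> C) \<subseteq> R\<^sup>+"
    proof
      fix p assume p: "p \<in> A \<inter> (C \<times> C)"
      show "p \<in> R\<^sup>+"
      proof (cases "p = (u, v)")
        case False thus ?thesis using p unfolding R_def A'_def by auto
      next
        case True
        hence uv: "u \<in> C" "v \<in> C" using p by auto
        have otherC: "\<And>w. w \<in> V \<Longrightarrow> w \<notin> C \<Longrightarrow> c w = 3 - i"
          using col i unfolding C_def by auto
        have "x \<in> C \<or> y \<in> C \<or> z \<in> C"
        proof (rule ccontr)
          assume "\<not> (x \<in> C \<or> y \<in> C \<or> z \<in> C)"
          hence h: "c x = 3 - i" "c y = 3 - i" "c z = 3 - i" using otherC mem by auto
          define j where "j = 3 - i"
          have j: "j \<in> {1, 2}" using i unfolding j_def by auto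
          define C' where "C' = {w\<in>V. c w = j}"
          have "(x, y) \<in> A' \<inter> (C' \<times> C')" "(y, z) \<in> A' \<inter> (C' \<times> C')" "(z, x) \<in> A' \<inter> (C' \<times> C')"
            using h arcs' mem unfolding C'_def j_def by auto
          hence "(x, x) \<in> (A' \<inter> (C' \<times> C'))\<^sup>+"
            by (meson trancl.r_into_trancl trancl.trancl_into_trancl)
          thus False using acy[OF j] unfolding acyclic_def C'_def by blast
        qed
        then obtain w where w: "w \<in> C" "(u, w) \<in> A'" "(w, v) \<in> A'" using arcs' by blast
        have "(u, w) \<in> R" "(w, v) \<in> R" using w uv unfolding R_def by auto
        hence "(u, v) \<in> R\<^sup>+" by (meson trancl.r_into_trancl trancl.trancl_into_trancl)
        thus ?thesis using True by simp
      qed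
    qed
    have "(A \<inter> (C \<times> C))\<^sup>+ \<subseteq> R\<^sup>+" using sub2
      using trancl_mono_subset[OF sub2] trancl_id[OF trans_trancl[of R]] by simp
    thus "acyclic (A \<inter> ({w\<in>V. c w = i} \<times> {w\<in>V. c w = i}))"
      using aR unfolding acyclic_def C_def by blast
  qed
  hence "two_dicolourable V A" unfolding two_dicolourable_def by blast
  thus False using assms unfolding dicritical3_def by blast
qed

end
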